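(* In a network satisfying (H1) and (H2), let $Y+S_0\rightleftarrows U_1\to Y+S_1\rightleftarrows\cdots\rightleftarrows U_L\to Y+S_L$ be a connected component with rate constants $a_j,b_j,c_j$ as in the context and $K_j:=b_j+c_j$. Then $a_L,b_L,c_L$ are identifiable from $s_L$ using the derivatives $\dot s_L,\ddot s_L$; and if $L>1$, the quantities $a_j$ and $K_j$, $1\le j\le L-1$, are identifiable from $s_L$ using $\dot s_L,\ddot s_L,s_L^{(3)}$.
   Context: Species are capital letters, concentrations lower-case letters. Mass-action system of a network with reactions $y\to y'$ and rates $k_{yy'}>0$ (vector $\mathbf{k}$): $\dot{\mathbf{x}}=\sum k_{yy'}\mathbf{x}^y(y'-y)$. Total derivative: $\dot\varphi=\sum_i\frac{\partial\varphi}{\partial x_i}\dot x_i$ with $\dot x_i$ replaced by the right-hand side; $\varphi^{(\ell)}$ its $\ell$-th iterate. A map $\psi$ of $\mathbf{k}$ is identifiable from $x$ using orders $1\le\ell\le D$ if, for positive $\mathbf{k}^*,\mathbf{k}^{**}$, equality $x^{(\ell)}(\mathbf{x},\mathbf{k}^* )=x^{(\ell)}(\mathbf{x},\mathbf{k}^{**})$ as polynomials in $\mathbf{x}$ for all $1\le\ell\le D$ implies $\psi(\mathbf{k}^* )=\psi(\mathbf{k}^{**})$. (H1) Every connected component has the form $Y+S_0\rightleftarrows U_1\to\cdots\rightleftarrows U_L\to Y+S_L$, i.e. reactions $Y+S_{j-1}\to U_j$ (rate $a_j$), $U_j\to Y+S_{j-1}$ (rate $b_j$), $U_j\to Y+S_j$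 (rate $c_j$); unique enzyme $Y$; intermediates distinct throughout the network; non-intermediates of a component pairwise distinct but may appear in other components; each complex in a unique component. $\mathscr{S}_U$ = substrates/products of the component of intermediate $U$. (H2) A partition $\mathscr{S}^{(0)}\sqcup\cdots\sqcup\mathscr{S}^{(M)}$ ($M\ge2$, nonempty, $\mathscr{S}^{(0)}$ the intermediates) with: for each intermediate $U$ with enzyme $Y$, some $\alpha\ge1$ has $\mathscr{S}_U\subseteq\mathscr{S}^{(\alpha)}$, $Y\notin\mathscr{S}^{(\alpha)}$. *)

theory Defs
  imports "HOL-Analysis.Analysis"
begin

text \<open>Species form a finite type 's; a complex is a vector of stoichiometric
coefficients 's => nat; a reaction is a pair (reactant complex, product complex);
concentrations are vectors x :: 's => real.\<close>

type_synonym 's cplx = "'s \<Rightarrow> nat"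
type_synonym 's reaction = "'s cplx \<times> 's cplx"

definition cpx1 :: "'s \<Rightarrow> 's cplx" where
  "cpx1 A = (\<lambda>s. if s = A then 1 else 0)"

definition cpx2 :: "'s \<Rightarrow> 's \<Rightarrow> 's cplx" where
  "cpx2 A B = (\<lambda>s. (if s = A then 1 else 0) + (if s = B then 1 else 0))"

definition monom :: "('s::finite \<Rightarrow> real) \<Rightarrow> 's cplx \<Rightarrow> real" where
  "monom x y = (\<Prod>s\<in>UNIV. x s ^ y s)"

definition massaction ::
  "('s::finite) reaction set \<Rightarrow> ('s reaction \<Rightarrow> real) \<Rightarrow> ('s \<Rightarrow> real) \<Rightarrow> 's \<Rightarrow> real" where
  "massaction R k x i =
     (\<Sum>r\<in>R. k r * monom x (fst r) * (real (snd r i) - real (fst r i)))"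

definition pdiff :: "(('s \<Rightarrow> real) \<Rightarrow> real) \<Rightarrow> 's \<Rightarrow> ('s \<Rightarrow> real) \<Rightarrow> real" where
  "pdiff \<phi> i x = deriv (\<lambda>t. \<phi> (x(i := t))) (x i)"

definition totder ::
  "('s::finite) reaction set \<Rightarrow> ('s reaction \<Rightarrow> real) \<Rightarrow> (('s \<Rightarrow> real) \<Rightarrow> real) \<Rightarrow> ('s \<Rightarrow> real) \<Rightarrow> real" where
  "totder R k \<phi> x = (\<Sum>i\<in>UNIV. pdiff \<phi> i x * massaction R k x i)"

definition iterder ::
  "('s::finite) reaction set \<Rightarrow> ('s reaction \<Rightarrow> real) \<Rightarrow> nat \<Rightarrow> (('s \<Rightarrow> real) \<Rightarrow> real) \<Rightarrow> ('s \<Rightarrow> real) \<Rightarrow> real" where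
  "iterder R k l \<phi> = (totder R k ^^ l) \<phi>"

text \<open>Network given by its components, indexed by a finite type 'c:
component c is  Y c + S c 0 <-> U c 1 -> Y c + S c 1 <-> ... <-> U c (L c) -> Y c + S c (L c).\<close>
definition reactions ::
  "('c::finite \<Rightarrow> 's) \<Rightarrow> ('c \<Rightarrow> nat \<Rightarrow> 's) \<Rightarrow> ('c \<Rightarrow> nat \<Rightarrow> 's) \<Rightarrow> ('c \<Rightarrow> nat) \<Rightarrow> 's reaction set" where
  "reactions Y S U L = (\<Union>c. \<Union>j\<in>{1..L c}.
      {(cpx2 (Y c) (S c (j - 1)), cpx1 (U c j)),
       (cpx1 (U c j), cpx2 (Y c) (S c (j - 1))),
       (cpx1 (U c j), cpx2 (Y c) (S c j))})"

definition rate_a where "rate_a Y S U k c j = k (cpx2 (Y c) (S c (j - 1)), cpx1 (U c j))"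
definition rate_b where "rate_b Y S U k c j = k (cpx1 (U c j), cpx2 (Y c) (S c (j - 1)))"
definition rate_c where "rate_c Y S U k c j = k (cpx1 (U c j), cpx2 (Y c) (S c j))"
definition rate_K where "rate_K Y S U k c j = rate_b Y S U k c j + rate_c Y S U k c j"

definition intermediates where
  "intermediates U L = {U c j | c j. 1 \<le> j \<and> j \<le> L c}"

definition H1 ::
  "('c::finite \<Rightarrow> 's::finite) \<Rightarrow> ('c \<Rightarrow> nat \<Rightarrow> 's) \<Rightarrow> ('c \<Rightarrow> nat \<Rightarrow> 's) \<Rightarrow> ('c \<Rightarrow> nat) \<Rightarrow> bool" where
  "H1 Y S U L \<longleftrightarrow>
     (\<forall>c. 1 \<le> L c) \<and>
     \<comment> \<open>non-intermediates of a component pairwise distinct\<close>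
     (\<forall>c. inj_on (S c) {0..L c} \<and> Y c \<notin> S c ` {0..L c}) \<and>
     \<comment> \<open>intermediates distinct throughout the network\<close>
     inj_on (\<lambda>(c, j). U c j) {(c, j). 1 \<le> j \<and> j \<le> L c} \<and>
     \<comment> \<open>intermediates are not non-intermediates of any component\<close>
     (\<forall>c c' j i. 1 \<le> j \<longrightarrow> j \<le> L c \<longrightarrow> i \<le> L c' \<longrightarrow>
        U c j \<noteq> S c' i \<and> U c j \<noteq> Y c') \<and>
     \<comment> \<open>each complex lies in a unique component\<close>
     (\<forall>c c' i i'. c \<noteq> c' \<longrightarrow> i \<le> L c \<longrightarrow> i' \<le> L c' \<longrightarrow>
        cpx2 (Y c) (S c i) \<noteq> cpx2 (Y c') (S c' i')) \<and>
     \<comment> \<open>the species set of the network is exactly the species type\<close>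
     (\<forall>s. \<exists>c. s = Y c \<or> (\<exists>i\<le>L c. s = S c i) \<or> (\<exists>j. 1 \<le> j \<and> j \<le> L c \<and> s = U c j))"

text \<open>Hypothesis (H2): partition given by a class map cls onto {0..M}, class 0 = intermediates.\<close>
definition H2 ::
  "('c::finite \<Rightarrow> 's::finite) \<Rightarrow> ('c \<Rightarrow> nat \<Rightarrow> 's) \<Rightarrow> ('c \<Rightarrow> nat \<Rightarrow> 's) \<Rightarrow> ('c \<Rightarrow> nat)
     \<Rightarrow> ('s \<Rightarrow> nat) \<Rightarrow> nat \<Rightarrow> bool" where
  "H2 Y S U L cls M \<longleftrightarrow>
     2 \<le> M \<and> range cls = {0..M} \<and>
     (\<forall>s. cls s = 0 \<longleftrightarrow> s \<in> intermediates U L) \<and>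
     (\<forall>c j. 1 \<le> j \<and> j \<le> L c \<longrightarrow>
        (\<exists>\<alpha>\<ge>1. (\<forall>i\<le>L c. cls (S c i) = \<alpha>) \<and> cls (Y c) \<noteq> \<alpha>))"

definition identifiable ::
  "('s::finite) reaction set \<Rightarrow> (('s reaction \<Rightarrow> real) \<Rightarrow> 'b) \<Rightarrow> 's \<Rightarrow> nat \<Rightarrow> bool" where
  "identifiable R \<psi> X D \<longleftrightarrow>
     (\<forall>k1 k2. (\<forall>r\<in>R. 0 < k1 r) \<longrightarrow> (\<forall>r\<in>R. 0 < k2 r) \<longrightarrow>
        (\<forall>l\<in>{1..D}. iterder R k1 l (\<lambda>x. x X) = iterder R k2 l (\<lambda>x. x X)) \<longrightarrow>
        \<psi> k1 = \<psi> k2)"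

end

theory Submission
  imports Defs
begin


definition dm :: "'s cplx \<Rightarrow> 's \<Rightarrow> ('s::finite \<Rightarrow> real) \<Rightarrow> real" where
  "dm y a x = real (y a) * monom x (y(a := y a - 1))"

definition d2m :: "'s cplx \<Rightarrow> 's \<Rightarrow> 's \<Rightarrow> ('s::finite \<Rightarrow> real) \<Rightarrow> real" where
  "d2m y i a x = real (y i) * dm (y(i := y i - 1)) a x"

definition dvec :: "'s reaction \<Rightarrow> 's \<Rightarrow> real" where
  "dvec r i = real (snd r i) - real (fst r i)"

definition GG where "GG R k s x i = (\<Sum>r\<in>R. k r * dm (fst r) i x * dvec r s)"
definition JJ where "JJ R k x a i = (\<Sum>r\<in>R. k r * dm (fst r) a x * dvec r i)"
definition HH where "HH R k s x a i = (\<Sum>r\<in>R. k r * d2m (fst r) i a x * dvec r s)"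

lemma monom_split:
  fixes x :: "'s::finite \<Rightarrow> real"
  shows "monom (x(a:=t)) y = t ^ y a * (\<Prod>s\<in>UNIV - {a}. x s ^ y s)"
proof -
  have "monom (x(a:=t)) y = (x(a:=t)) a ^ y a * (\<Prod>s\<in>UNIV - {a}. (x(a:=t)) s ^ y s)"
    unfolding monom_def by (rule prod.remove) auto
  also have "(\<Prod>s\<in>UNIV - {a}. (x(a:=t)) s ^ y s) = (\<Prod>s\<in>UNIV - {a}. x s ^ y s)"
    by (rule prod.cong) auto
  finally show ?thesis by (metis fun_upd_same)
qed

lemma monom_deriv:
  fixes x :: "'s::finite \<Rightarrow> real"
  shows "((\<lambda>t. monom (x(a:=t)) y) has_real_derivative dm y a x) (at (x a))"
proof -
  define C where "C = (\<Prod>s\<in>UNIV - {a}. x s ^ y s)"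
  have e: "(\<lambda>t. monom (x(a:=t)) y) = (\<lambda>t. t ^ y a * C)"
    unfolding C_def by (rule ext, rule monom_split)
  have "dm y a x = real (y a) * (x a ^ (y a - Suc 0)) * C"
    unfolding dm_def C_def
    using monom_split[of "x" a "x a" "y(a := y a - 1)"]
    by (simp add: prod.cong[of "UNIV - {a}" "UNIV - {a}" "\<lambda>s. x s ^ (y(a := y a - 1)) s" "\<lambda>s. x s ^ y s"])
  then show ?thesis unfolding e
    by (auto intro!: derivative_eq_intros DERIV_cmult_right DERIV_pow)
qed

lemma dm_deriv:
  fixes x :: "'s::finite \<Rightarrow> real"
  shows "((\<lambda>t. dm y i (x(a:=t))) has_real_derivative d2m y i a x) (at (x a))"
proof -
  have "(\<lambda>t. dm y i (x(a:=t))) = (\<lambda>t. real (y i) * monom (x(a:=t)) (y(i := y i - 1)))"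
    by (simp add: dm_def)
  then show ?thesis unfolding d2m_def by (simp only: DERIV_cmult[OF monom_deriv])
qed

lemma pdiff_eq: "((\<lambda>t. \<phi> (x(i:=t))) has_real_derivative D) (at (x i)) \<Longrightarrow> pdiff \<phi> i x = D"
  unfolding pdiff_def by (rule DERIV_imp_deriv)

lemma massaction_deriv:
  fixes x :: "'s::finite \<Rightarrow> real"
  assumes "finite R"
  shows "((\<lambda>t. massaction R k (x(a:=t)) i) has_real_derivative JJ R k x a i) (at (x a))"
  unfolding massaction_def JJ_def dvec_def
  by (intro DERIV_sum DERIV_cmult_right DERIV_cmult monom_deriv)

lemma GG_deriv:
  fixes x :: "'s::finite \<Rightarrow> real"
  assumes "finite R"
  shows "((\<lambda>t. GG R k s (x(a:=t)) i) has_real_derivative HH R k s x a i) (at (x a))"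
  unfolding GG_def HH_def
  by (intro DERIV_sum DERIV_cmult_right DERIV_cmult dm_deriv)

lemma massaction_GG:
  fixes x :: "'s::finite \<Rightarrow> real"
  assumes "finite R"
  shows "((\<lambda>t. massaction R k (x(a:=t)) s) has_real_derivative GG R k s x a) (at (x a))"
  using massaction_deriv[OF assms] unfolding JJ_def GG_def .

lemma iter1:
  fixes R :: "('s::finite) reaction set"
  shows "iterder R k 1 (\<lambda>x. x s) = (\<lambda>x. massaction R k x s)"
proof -
  have pd: "pdiff (\<lambda>x. x s) i x = (if i = s then 1 else 0)" for i x
  proof (rule pdiff_eq)
    show "((\<lambda>t. (x(i:=t)) s) has_real_derivative (if i = s then 1 else 0)) (at (x i))"
      by (cases "i = s") (auto intro: derivative_eq_intros)
  qed
  have "(\<Sum>i\<in>UNIV. pdiff (\<lambda>x. x s) i x * massaction R k x i) = massaction R k x s" for x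
    by (simp add: pd if_distrib[of "\<lambda>z. z * _"] cong del: if_cong)
  then show ?thesis unfolding iterder_def totder_def by auto
qed

lemma iter2:
  fixes R :: "('s::finite) reaction set"
  assumes "finite R"
  shows "iterder R k 2 (\<lambda>x. x s) = (\<lambda>x. \<Sum>i\<in>UNIV. GG R k s x i * massaction R k x i)"
proof -
  have "iterder R k 2 (\<lambda>x. x s) = totder R k (iterder R k 1 (\<lambda>x. x s))"
    unfolding iterder_def by (simp add: numeral_2_eq_2)
  also have "\<dots> = totder R k (\<lambda>x. massaction R k x s)" by (simp only: iter1)
  also have "\<dots> = (\<lambda>x. \<Sum>i\<in>UNIV. GG R k s x i * massaction R k x i)"
  proof -
    have pd: "\<And>i x. pdiff (\<lambda>x. massaction R k x s) i x = GG R k s x i"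
      by (rule pdiff_eq, rule massaction_GG[OF assms])
    show ?thesis unfolding totder_def pd by simp
  qed
  finally show ?thesis .
qed

lemma iter3:
  fixes R :: "('s::finite) reaction set"
  assumes "finite R"
  shows "iterder R k 3 (\<lambda>x. x s) = (\<lambda>x. \<Sum>a\<in>UNIV.
     (\<Sum>i\<in>UNIV. HH R k s x a i * massaction R k x i + GG R k s x i * JJ R k x a i) * massaction R k x a)"
proof -
  have "iterder R k 3 (\<lambda>x. x s) = totder R k (iterder R k 2 (\<lambda>x. x s))"
    unfolding iterder_def by (simp add: numeral_3_eq_3 numeral_2_eq_2)
  also have "\<dots> = totder R k (\<lambda>x. \<Sum>i\<in>UNIV. GG R k s x i * massaction R k x i)" by (simp only: iter2[OF assms])
  also have "\<dots> = (\<lambda>x. \<Sum>a\<in>UNIV.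
     (\<Sum>i\<in>UNIV. HH R k s x a i * massaction R k x i + GG R k s x i * JJ R k x a i) * massaction R k x a)"
  proof -
    have "pdiff (\<lambda>x. \<Sum>i\<in>UNIV. GG R k s x i * massaction R k x i) a x =
       (\<Sum>i\<in>UNIV. HH R k s x a i * massaction R k x i + GG R k s x i * JJ R k x a i)" for a x
      apply (rule pdiff_eq)
      apply (rule DERIV_sum)
      apply (rule DERIV_mult[OF GG_deriv[OF assms] massaction_deriv[OF assms], THEN DERIV_cong])
      apply (simp add: algebra_simps)
      done
    then show ?thesis unfolding totder_def by simp
  qed
  finally show ?thesis .
qed


lemma cpx1_app: "cpx1 A z = (if z = A then 1 else 0)" by (simp add: cpx1_def)
lemma cpx2_app: "cpx2 A B z = (if z = A then 1 else 0) + (if z = B then 1 else 0)" by (simp add: cpx2_def)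
lemma cpx2_sym: "cpx2 A B = cpx2 B A" by (auto simp: cpx2_def)

lemma cpx1_inj: "cpx1 A = cpx1 B \<longleftrightarrow> A = B"
proof
  assume "cpx1 A = cpx1 B"
  then have "cpx1 A A = cpx1 B A" by simp
  then show "A = B" by (simp add: cpx1_app split: if_splits)
qed simp

lemma cpx2_eq: assumes "A \<noteq> B" "C \<noteq> D"
  shows "cpx2 A B = cpx2 C D \<longleftrightarrow> (A = C \<and> B = D) \<or> (A = D \<and> B = C)"
proof
  assume h: "cpx2 A B = cpx2 C D"
  have "cpx2 C D A = (1::nat)" using h[symmetric] assms(1) by (simp add: cpx2_app)
  then have a: "A = C \<or> A = D" unfolding cpx2_app by (cases "A = C"; cases "A = D") auto
  have "cpx2 C D B = (1::nat)" using h[symmetric] assms(1) by (simp add: cpx2_app)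
  then have b: "B = C \<or> B = D" unfolding cpx2_app by (cases "B = C"; cases "B = D") auto
  show "(A = C \<and> B = D) \<or> (A = D \<and> B = C)" using a b assms by blast
next
  assume "(A = C \<and> B = D) \<or> (A = D \<and> B = C)"
  then show "cpx2 A B = cpx2 C D" using cpx2_sym by metis
qed

lemma cpx2_ne_cpx1: "U \<noteq> A \<Longrightarrow> U \<noteq> B \<Longrightarrow> cpx2 A B \<noteq> cpx1 U"
proof
  assume "U \<noteq> A" "U \<noteq> B" "cpx2 A B = cpx1 U"
  then have "cpx2 A B U = cpx1 U U" by simp
  with \<open>U \<noteq> A\<close> \<open>U \<noteq> B\<close> show False by (simp add: cpx1_app cpx2_app)
qed

lemma monom_zero: "monom x (\<lambda>_. 0) = 1" by (simp add: monom_def)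

lemma monom_cpx1: "monom x (cpx1 A) = x A"
proof -
  have "monom x (cpx1 A) = (\<Prod>s\<in>UNIV. if s = A then x s else 1)"
    unfolding monom_def cpx1_def by (rule prod.cong) auto
  then show ?thesis by simp
qed

lemma monom_cpx2: "A \<noteq> B \<Longrightarrow> monom x (cpx2 A B) = x A * x B"
proof -
  have "monom x (cpx2 A B) = (\<Prod>s\<in>UNIV. (if s = A then x s else 1) * (if s = B then x s else 1))"
    unfolding monom_def cpx2_def by (rule prod.cong) (auto simp: power_add)
  then show "A \<noteq> B \<Longrightarrow> ?thesis" by (simp add: prod.distrib)
qed

lemma dm_cpx1: "dm (cpx1 A) a x = (if a = A then 1 else 0)"
proof -
  have "(cpx1 A)(A := 0) = (\<lambda>_. 0)" by (auto simp: cpx1_def)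
  then show ?thesis by (auto simp: dm_def cpx1_app monom_zero)
qed

lemma dm_cpx2: "A \<noteq> B \<Longrightarrow> dm (cpx2 A B) a x = (if a = A then x B else if a = B then x A else 0)"
proof -
  assume ne: "A \<noteq> B"
  have 1: "(cpx2 A B)(A := 0) = cpx1 B" using ne by (auto simp: cpx2_def cpx1_def)
  have 2: "(cpx2 A B)(B := 0) = cpx1 A" using ne by (auto simp: cpx2_def cpx1_def)
  show ?thesis using ne unfolding dm_def
    by (auto simp: 1 2 monom_cpx1 cpx2_app)
qed

lemma d2m_cpx1: "d2m (cpx1 A) i a x = 0"
proof -
  have "(cpx1 A)(A := 0) = (\<lambda>_. 0)" by (auto simp: cpx1_def)
  then show ?thesis by (auto simp: d2m_def dm_def cpx1_app)
qed

lemma d2m_cpx2: "A \<noteq> B \<Longrightarrow> d2m (cpx2 A B) i a x = (if (i = A \<and> a = B) \<or> (i = B \<and> a = A) then 1 else 0)"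
proof -
  assume ne: "A \<noteq> B"
  have 1: "(cpx2 A B)(A := 0) = cpx1 B" using ne by (auto simp: cpx2_def cpx1_def)
  have 2: "(cpx2 A B)(B := 0) = cpx1 A" using ne by (auto simp: cpx2_def cpx1_def)
  show ?thesis using ne unfolding d2m_def
    by (auto simp: 1 2 dm_cpx1 cpx2_app)
qed

definition CV :: "('s::finite \<Rightarrow> real) \<Rightarrow> 's reaction \<Rightarrow> real" where
  "CV h r = (\<Sum>i\<in>UNIV. h i * dvec r i)"

definition cv :: "('s::finite \<Rightarrow> real) \<Rightarrow> 's cplx \<Rightarrow> real" where
  "cv h y = (\<Sum>i\<in>UNIV. h i * real (y i))"

lemma CV_cv: "CV h r = cv h (snd r) - cv h (fst r)"
  by (simp add: CV_def cv_def dvec_def right_diff_distrib sum_subtractf)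

lemma cv_cpx1: "cv h (cpx1 A) = h A"
proof -
  have "\<And>i. h i * real (cpx1 A i) = (if i = A then h i else 0)" by (simp add: cpx1_app)
  then show ?thesis by (simp add: cv_def)
qed

lemma cv_cpx2: "cv h (cpx2 A B) = h A + h B"
proof -
  have "\<And>i. h i * real (cpx2 A B i) = (if i = A then h i else 0) + (if i = B then h i else 0)"
    by (simp add: cpx2_app distrib_left)
  then show ?thesis by (simp add: cv_def sum.distrib)
qed

lemma ma_dvec: "massaction R k x i = (\<Sum>r\<in>R. k r * monom x (fst r) * dvec r i)"
  by (simp add: massaction_def dvec_def)

lemma swap_ma:
  "(\<Sum>i\<in>UNIV. g i * massaction R k x i) = (\<Sum>r\<in>R. k r * monom x (fst r) * CV g r)"
proof -
  have "(\<Sum>i\<in>UNIV. g i * massaction R k x i) = (\<Sum>i\<in>UNIV. \<Sum>r\<in>R. g i * (k r * monom x (fst r) * dvec r i))"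
    by (simp add: ma_dvec sum_distrib_left)
  also have "\<dots> = (\<Sum>r\<in>R. \<Sum>i\<in>UNIV. g i * (k r * monom x (fst r) * dvec r i))" by (rule sum.swap)
  also have "\<dots> = (\<Sum>r\<in>R. k r * monom x (fst r) * CV g r)"
    by (simp add: CV_def sum_distrib_left mult_ac)
  finally show ?thesis .
qed

lemma swap_JJ:
  "(\<Sum>i\<in>UNIV. g i * JJ R k x a i) = (\<Sum>r\<in>R. k r * dm (fst r) a x * CV g r)"
proof -
  have "(\<Sum>i\<in>UNIV. g i * JJ R k x a i) = (\<Sum>i\<in>UNIV. \<Sum>r\<in>R. g i * (k r * dm (fst r) a x * dvec r i))"
    by (simp add: JJ_def sum_distrib_left)
  also have "\<dots> = (\<Sum>r\<in>R. \<Sum>i\<in>UNIV. g i * (k r * dm (fst r) a x * dvec r i))" by (rule sum.swap)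
  also have "\<dots> = (\<Sum>r\<in>R. k r * dm (fst r) a x * CV g r)"
    by (simp add: CV_def sum_distrib_left mult_ac)
  finally show ?thesis .
qed

definition pt :: "'s set \<Rightarrow> 's \<Rightarrow> real" where "pt P z = (if z \<in> P then 1 else 0)"


lemma sum_one_point:
  assumes "finite A" "a \<in> A" "\<And>b. b \<in> A \<Longrightarrow> b \<noteq> a \<Longrightarrow> f b = 0"
  shows "sum f A = f a"
proof -
  have "sum f A = sum f {a}" using assms by (intro sum.mono_neutral_right) auto
  then show ?thesis by simp
qed

lemma sum_two_points:
  assumes "finite A" "a \<in> A" "b \<in> A" "a \<noteq> b" "\<And>d. d \<in> A \<Longrightarrow> d \<noteq> a \<Longrightarrow> d \<noteq> b \<Longrightarrow> f d = 0"
  shows "sum f A = f a + f b"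
proof -
  have "sum f A = sum f {a, b}" using assms by (intro sum.mono_neutral_right) auto
  then show ?thesis using assms(4) by simp
qed

lemma sum_one_pt:
  assumes "finite A" "(a1,a2) \<in> A" "\<And>c j. (c,j) \<in> A \<Longrightarrow> (c,j) \<noteq> (a1,a2) \<Longrightarrow> f c j = 0"
  shows "(\<Sum>(c,j)\<in>A. f c j) = f a1 a2"
  using sum_one_point[OF assms(1,2), of "\<lambda>(c,j). f c j"] assms(3) by auto

lemma sum_two_pt:
  assumes "finite A" "(a1,a2) \<in> A" "(b1,b2) \<in> A" "(a1,a2) \<noteq> (b1,b2)"
    "\<And>c j. (c,j) \<in> A \<Longrightarrow> (c,j) \<noteq> (a1,a2) \<Longrightarrow> (c,j) \<noteq> (b1,b2) \<Longrightarrow> f c j = 0"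
  shows "(\<Sum>(c,j)\<in>A. f c j) = f a1 a2 + f b1 b2"
  using sum_two_points[OF assms(1-4), of "\<lambda>(c,j). f c j"] assms(5) by auto

lemma sum_zero_pt:
  assumes "\<And>c j. (c,j) \<in> A \<Longrightarrow> f c j = 0"
  shows "(\<Sum>(c,j)\<in>A. f c j) = 0"
  using assms by (intro sum.neutral) auto

lemma img_pair:
  assumes "r \<in> (\<lambda>(c,j). f c j) ` A"
  obtains c j where "(c,j) \<in> A" "r = f c j"
proof -
  from assms obtain p where p: "p \<in> A" "r = (\<lambda>(c,j). f c j) p" by (rule imageE)
  obtain c j where "p = (c,j)" by (cases p)
  with p show ?thesis using that by simp
qed

locale netw =
  fixes Y :: "'c::finite \<Rightarrow> 's::finite" and S U :: "'c \<Rightarrow> nat \<Rightarrow> 's"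
    and L :: "'c \<Rightarrow> nat" and cls :: "'s \<Rightarrow> nat" and M :: nat and c0 :: 'c
  assumes h1: "H1 Y S U L" and h2: "H2 Y S U L cls M"
begin

abbreviation "R \<equiv> reactions Y S U L"
definition "r1 c j = (cpx2 (Y c) (S c (j - 1)), cpx1 (U c j))"
definition "r2 c j = (cpx1 (U c j), cpx2 (Y c) (S c (j - 1)))"
definition "r3 c j = (cpx1 (U c j), cpx2 (Y c) (S c j))"
definition "I = {(c, j). 1 \<le> j \<and> j \<le> L c}"
lemma I_iff: "(c,j) \<in> I \<longleftrightarrow> 1 \<le> j \<and> j \<le> L c" by (simp add: I_def)

lemma Lpos: "1 \<le> L c" using h1 by (simp add: H1_def)
lemma Sinj: "i \<le> L c \<Longrightarrow> i' \<le> L c \<Longrightarrow> S c i = S c i' \<longleftrightarrow> i = i'"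
  using h1 unfolding H1_def inj_on_def by auto
lemma YS: "i \<le> L c \<Longrightarrow> Y c \<noteq> S c i"
proof -
  assume "i \<le> L c"
  moreover have "Y c \<notin> S c ` {0..L c}" using h1 unfolding H1_def by auto
  ultimately show ?thesis by force
qed
lemma SY: "i \<le> L c \<Longrightarrow> S c i \<noteq> Y c" using YS by metis
lemma Uinj: "1 \<le> j \<Longrightarrow> j \<le> L c \<Longrightarrow> 1 \<le> j' \<Longrightarrow> j' \<le> L c' \<Longrightarrow> U c j = U c' j' \<longleftrightarrow> c = c' \<and> j = j'"
  using h1 unfolding H1_def inj_on_def by auto
lemma h1_US: "\<forall>c c' j i. 1 \<le> j \<longrightarrow> j \<le> L c \<longrightarrow> i \<le> L c' \<longrightarrow> U c j \<noteq> S c' i \<and> U c j \<noteq> Y c'"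
  using h1 unfolding H1_def by (elim conjE) assumption
lemma h1_cu: "\<forall>c c' i i'. c \<noteq> c' \<longrightarrow> i \<le> L c \<longrightarrow> i' \<le> L c' \<longrightarrow> cpx2 (Y c) (S c i) \<noteq> cpx2 (Y c') (S c' i')"
  using h1 unfolding H1_def by (elim conjE) assumption
lemma UY: "1 \<le> j \<Longrightarrow> j \<le> L c \<Longrightarrow> U c j \<noteq> Y c'"
  using h1_US[rule_format, of j c 0 c'] by simp
lemma YU: "1 \<le> j \<Longrightarrow> j \<le> L c \<Longrightarrow> Y c' \<noteq> U c j" using UY by metis
lemma US: "1 \<le> j \<Longrightarrow> j \<le> L c \<Longrightarrow> i \<le> L c' \<Longrightarrow> U c j \<noteq> S c' i" using h1_US[rule_format, of j c i c'] by simp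
lemma SU: "1 \<le> j \<Longrightarrow> j \<le> L c \<Longrightarrow> i \<le> L c' \<Longrightarrow> S c' i \<noteq> U c j" using US by metis
lemma cuniq: "i \<le> L c \<Longrightarrow> i' \<le> L c' \<Longrightarrow> cpx2 (Y c) (S c i) = cpx2 (Y c') (S c' i') \<Longrightarrow> c = c'"
  using h1_cu[rule_format, of c c' i i'] by auto

lemma clsS: "i \<le> L c \<Longrightarrow> i' \<le> L c \<Longrightarrow> cls (S c i) = cls (S c i')"
proof -
  assume a: "i \<le> L c" "i' \<le> L c"
  obtain \<alpha> where "\<forall>i\<le>L c. cls (S c i) = \<alpha>" using h2 Lpos[of c] unfolding H2_def by blast
  then show ?thesis using a by auto
qed

lemma clsYS: "i \<le> L c \<Longrightarrow> cls (Y c) \<noteq> cls (S c i)"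
proof -
  assume a: "i \<le> L c"
  obtain \<alpha> where "\<forall>i\<le>L c. cls (S c i) = \<alpha>" "cls (Y c) \<noteq> \<alpha>" using h2 Lpos[of c] unfolding H2_def by blast
  then show ?thesis using a by auto
qed

lemma finI: "finite I"
proof -
  have m: "\<And>c. L c \<le> Max (range L)" by (rule Max_ge) auto
  have "I \<subseteq> UNIV \<times> {..Max (range L)}"
  proof
    fix p assume "p \<in> I"
    then obtain c j where p: "p = (c,j)" "j \<le> L c" by (cases p) (simp add: I_iff)
    then show "p \<in> UNIV \<times> {..Max (range L)}" using le_trans[OF p(2) m[of c]] by simp
  qed
  then show ?thesis by (rule finite_subset) simp
qed

lemma memR0: "R = (\<Union>c. \<Union>j\<in>{1..L c}. {r1 c j, r2 c j, r3 c j})"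
  unfolding reactions_def r1_def r2_def r3_def by (rule refl)

lemma memR: "r \<in> R \<longleftrightarrow> (\<exists>c j. (c,j) \<in> I \<and> (r = r1 c j \<or> r = r2 c j \<or> r = r3 c j))"
  unfolding memR0 I_iff atLeastAtMost_iff UN_iff insert_iff empty_iff Bex_def by blast

lemma R_eq: "R = (\<lambda>(c,j). r1 c j) ` I \<union> (\<lambda>(c,j). r2 c j) ` I \<union> (\<lambda>(c,j). r3 c j) ` I"
proof (rule set_eqI)
  fix r
  show "r \<in> R \<longleftrightarrow> r \<in> (\<lambda>(c,j). r1 c j) ` I \<union> (\<lambda>(c,j). r2 c j) ` I \<union> (\<lambda>(c,j). r3 c j) ` I"
  proof
    assume "r \<in> R"
    then obtain c j where cj: "(c,j) \<in> I" "r = r1 c j \<or> r = r2 c j \<or> r = r3 c j" by (auto simp: memR)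
    have "r1 c j \<in> (\<lambda>(c,j). r1 c j) ` I" "r2 c j \<in> (\<lambda>(c,j). r2 c j) ` I" "r3 c j \<in> (\<lambda>(c,j). r3 c j) ` I"
      using cj(1) by (auto intro: image_eqI[where x="(c,j)"])
    then show "r \<in> (\<lambda>(c,j). r1 c j) ` I \<union> (\<lambda>(c,j). r2 c j) ` I \<union> (\<lambda>(c,j). r3 c j) ` I"
      using cj(2) by blast
  next
    assume "r \<in> (\<lambda>(c,j). r1 c j) ` I \<union> (\<lambda>(c,j). r2 c j) ` I \<union> (\<lambda>(c,j). r3 c j) ` I"
    then obtain c j where "(c,j) \<in> I" "r = r1 c j \<or> r = r2 c j \<or> r = r3 c j" by auto
    then show "r \<in> R" by (auto simp: memR)
  qed
qed

lemma finR: "finite R" unfolding R_eq using finI by auto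

lemma jm1: "(c,j) \<in> I \<Longrightarrow> j - 1 \<le> L c" unfolding I_iff by arith

lemma r1_ne_r23: "(c,j) \<in> I \<Longrightarrow> (c',j') \<in> I \<Longrightarrow> fst (r1 c j) \<noteq> cpx1 (U c' j')"
proof -
  assume a: "(c,j) \<in> I" "(c',j') \<in> I"
  have j: "1 \<le> j'" "j' \<le> L c'" "j - 1 \<le> L c" using a jm1[OF a(1)] unfolding I_iff by simp_all
  then have "U c' j' \<noteq> Y c" "U c' j' \<noteq> S c (j - 1)"
    using UY[OF j(1,2)] US[OF j(1,2,3)] by auto
  then show ?thesis unfolding r1_def by (simp add: cpx2_ne_cpx1)
qed



lemma sumR: "(\<Sum>r\<in>R. g r) = (\<Sum>(c,j)\<in>I. g (r1 c j) + g (r2 c j) + g (r3 c j))"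
proof -
  have inj1: "inj_on (\<lambda>(c,j). r1 c j) I"
  proof (rule inj_onI)
    fix p q assume a: "p \<in> I" "q \<in> I" "(\<lambda>(c,j). r1 c j) p = (\<lambda>(c,j). r1 c j) q"
    obtain c j c' j' where pq: "p = (c,j)" "q = (c',j')" by (cases p, cases q) auto
    have "snd (r1 c j) = snd (r1 c' j')" using a(3) unfolding pq by simp
    then have "U c j = U c' j'" by (simp add: r1_def cpx1_inj)
    then show "p = q" using a(1,2) unfolding pq by (simp add: I_iff Uinj)
  qed
  have inj2: "inj_on (\<lambda>(c,j). r2 c j) I"
  proof (rule inj_onI)
    fix p q assume a: "p \<in> I" "q \<in> I" "(\<lambda>(c,j). r2 c j) p = (\<lambda>(c,j). r2 c j) q"
    obtain c j c' j' where pq: "p = (c,j)" "q = (c',j')" by (cases p, cases q) auto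
    have "fst (r2 c j) = fst (r2 c' j')" using a(3) unfolding pq by simp
    then have "U c j = U c' j'" by (simp add: r2_def cpx1_inj)
    then show "p = q" using a(1,2) unfolding pq by (simp add: I_iff Uinj)
  qed
  have inj3: "inj_on (\<lambda>(c,j). r3 c j) I"
  proof (rule inj_onI)
    fix p q assume a: "p \<in> I" "q \<in> I" "(\<lambda>(c,j). r3 c j) p = (\<lambda>(c,j). r3 c j) q"
    obtain c j c' j' where pq: "p = (c,j)" "q = (c',j')" by (cases p, cases q) auto
    have "fst (r3 c j) = fst (r3 c' j')" using a(3) unfolding pq by simp
    then have "U c j = U c' j'" by (simp add: r3_def cpx1_inj)
    then show "p = q" using a(1,2) unfolding pq by (simp add: I_iff Uinj)
  qed
  have d12: "(\<lambda>(c,j). r1 c j) ` I \<inter> (\<lambda>(c,j). r2 c j) ` I = {}"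
  proof (rule ccontr)
    assume "\<not> ?thesis"
    then obtain r where rr: "r \<in> (\<lambda>(c,j). r1 c j) ` I" "r \<in> (\<lambda>(c,j). r2 c j) ` I" by blast
    from rr(1) obtain c j where m1: "(c,j) \<in> I" "r = r1 c j" by (rule img_pair)
    from rr(2) obtain c' j' where m2: "(c',j') \<in> I" "r = r2 c' j'" by (rule img_pair)
    have m: "(c,j) \<in> I" "(c',j') \<in> I" "r1 c j = r2 c' j'" using m1 m2 by auto
    then have "fst (r1 c j) = cpx1 (U c' j')" by (simp add: r2_def)
    with r1_ne_r23[OF m(1,2)] show False by simp
  qed
  have d13: "(\<lambda>(c,j). r1 c j) ` I \<inter> (\<lambda>(c,j). r3 c j) ` I = {}"
  proof (rule ccontr)
    assume "\<not> ?thesis"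
    then obtain r where rr: "r \<in> (\<lambda>(c,j). r1 c j) ` I" "r \<in> (\<lambda>(c,j). r3 c j) ` I" by blast
    from rr(1) obtain c j where m1: "(c,j) \<in> I" "r = r1 c j" by (rule img_pair)
    from rr(2) obtain c' j' where m2: "(c',j') \<in> I" "r = r3 c' j'" by (rule img_pair)
    have m: "(c,j) \<in> I" "(c',j') \<in> I" "r1 c j = r3 c' j'" using m1 m2 by auto
    then have "fst (r1 c j) = cpx1 (U c' j')" by (simp add: r3_def)
    with r1_ne_r23[OF m(1,2)] show False by simp
  qed
  have d23: "(\<lambda>(c,j). r2 c j) ` I \<inter> (\<lambda>(c,j). r3 c j) ` I = {}"
  proof (rule ccontr)
    assume "\<not> ?thesis"
    then obtain r where rr: "r \<in> (\<lambda>(c,j). r2 c j) ` I" "r \<in> (\<lambda>(c,j). r3 c j) ` I" by blast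
    from rr(1) obtain c j where m1: "(c,j) \<in> I" "r = r2 c j" by (rule img_pair)
    from rr(2) obtain c' j' where m2: "(c',j') \<in> I" "r = r3 c' j'" by (rule img_pair)
    have m: "(c,j) \<in> I" "(c',j') \<in> I" "r2 c j = r3 c' j'" using m1 m2 by auto
    then have "U c j = U c' j'" by (simp add: r2_def r3_def cpx1_inj)
    with m have cc: "c' = c" "j' = j" by (simp_all add: Uinj I_iff)
    have "snd (r2 c j) = snd (r3 c j)" using m(3) unfolding cc by (rule arg_cong)
    then have e: "cpx2 (Y c) (S c (j - 1)) = cpx2 (Y c) (S c j)" by (simp only: r2_def r3_def snd_conv)
    have "cpx2 (Y c) (S c (j - 1)) (S c j) = cpx2 (Y c) (S c j) (S c j)" by (simp only: e)
    moreover have "S c j \<noteq> Y c" using m(1) by (simp add: I_iff SY)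
    moreover have "S c j \<noteq> S c (j - 1)"
    proof -
      have "j \<noteq> j - 1" "j \<le> L c" using m(1) unfolding I_iff by arith+
      then show ?thesis using Sinj[of j c "j - 1", OF _ jm1[OF m(1)]] by simp
    qed
    ultimately show False by (simp add: cpx2_app)
  qed
  have "(\<Sum>r\<in>R. g r) = (\<Sum>r\<in>(\<lambda>(c,j). r1 c j) ` I. g r) + (\<Sum>r\<in>(\<lambda>(c,j). r2 c j) ` I. g r)
      + (\<Sum>r\<in>(\<lambda>(c,j). r3 c j) ` I. g r)"
  proof -
    have f: "finite ((\<lambda>(c,j). r1 c j) ` I)" "finite ((\<lambda>(c,j). r2 c j) ` I)" "finite ((\<lambda>(c,j). r3 c j) ` I)"
      by (rule finite_imageI[OF finI])+
    have d: "((\<lambda>(c,j). r1 c j) ` I \<union> (\<lambda>(c,j). r2 c j) ` I) \<inter> (\<lambda>(c,j). r3 c j) ` I = {}"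
      by (simp only: Int_Un_distrib2 d13 d23 Un_empty)
    show ?thesis unfolding R_eq
      by (simp only: sum.union_disjoint[OF finite_UnI[OF f(1,2)] f(3) d] sum.union_disjoint[OF f(1,2) d12])
  qed
  also have "\<dots> = (\<Sum>(c,j)\<in>I. g (r1 c j)) + (\<Sum>(c,j)\<in>I. g (r2 c j)) + (\<Sum>(c,j)\<in>I. g (r3 c j))"
  proof -
    have "\<And>h. inj_on (\<lambda>(c,j). h c j) I \<Longrightarrow> sum g ((\<lambda>(c,j). h c j) ` I) = (\<Sum>(c,j)\<in>I. g (h c j))"
      by (simp only: sum.reindex) (rule sum.cong, auto)
    then show ?thesis using inj1 inj2 inj3 by simp
  qed
  also have "\<dots> = (\<Sum>(c,j)\<in>I. g (r1 c j) + g (r2 c j) + g (r3 c j))"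
    by (simp only: sum.distrib[symmetric]) (rule sum.cong, auto)
  finally show ?thesis .
qed

abbreviation "sp \<equiv> S c0 (L c0)"
definition "nonint z \<longleftrightarrow> (\<forall>c j. (c,j) \<in> I \<longrightarrow> z \<noteq> U c j)"


lemma le_diff_le: "j \<le> n \<Longrightarrow> j - m \<le> (n::nat)" by arith


lemma ne1: "(c,j) \<in> I \<Longrightarrow> Y c \<noteq> S c (j - 1)" using YS[OF jm1] .

lemma mon1: "(c,j) \<in> I \<Longrightarrow> monom x (fst (r1 c j)) = x (Y c) * x (S c (j - 1))"
  using ne1[of c j] by (simp add: r1_def monom_cpx2)
lemma mon2: "monom x (fst (r2 c j)) = x (U c j)" by (simp add: r2_def monom_cpx1)
lemma mon3: "monom x (fst (r3 c j)) = x (U c j)" by (simp add: r3_def monom_cpx1)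
lemma dm1: "(c,j) \<in> I \<Longrightarrow> dm (fst (r1 c j)) a x =
   (if a = Y c then x (S c (j - 1)) else if a = S c (j - 1) then x (Y c) else 0)"
  using ne1[of c j] by (simp add: r1_def dm_cpx2)
lemma dm2: "dm (fst (r2 c j)) a x = (if a = U c j then 1 else 0)" by (simp add: r2_def dm_cpx1)
lemma dm3: "dm (fst (r3 c j)) a x = (if a = U c j then 1 else 0)" by (simp add: r3_def dm_cpx1)
lemma d2m1: "(c,j) \<in> I \<Longrightarrow> d2m (fst (r1 c j)) i a x =
   (if (i = Y c \<and> a = S c (j - 1)) \<or> (i = S c (j - 1) \<and> a = Y c) then 1 else 0)"
  using ne1[of c j] by (simp add: r1_def d2m_cpx2)
lemma d2m2: "d2m (fst (r2 c j)) i a x = 0" by (simp add: r2_def d2m_cpx1)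
lemma d2m3: "d2m (fst (r3 c j)) i a x = 0" by (simp add: r3_def d2m_cpx1)
lemma CV1: "(c,j) \<in> I \<Longrightarrow> CV h (r1 c j) = h (U c j) - h (Y c) - h (S c (j - 1))"
  by (simp add: r1_def CV_cv cv_cpx1 cv_cpx2)
lemma CV2: "CV h (r2 c j) = h (Y c) + h (S c (j - 1)) - h (U c j)"
  by (simp add: r2_def CV_cv cv_cpx1 cv_cpx2)
lemma CV3: "CV h (r3 c j) = h (Y c) + h (S c j) - h (U c j)"
  by (simp add: r3_def CV_cv cv_cpx1 cv_cpx2)
lemma dv1: "nonint z \<Longrightarrow> (c,j) \<in> I \<Longrightarrow> dvec (r1 c j) z = - ((if z = Y c then 1 else 0) + (if z = S c (j - 1) then 1 else 0))"
  by (auto simp: r1_def dvec_def cpx1_app cpx2_app nonint_def)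
lemma dv2: "nonint z \<Longrightarrow> (c,j) \<in> I \<Longrightarrow> dvec (r2 c j) z = (if z = Y c then 1 else 0) + (if z = S c (j - 1) then 1 else 0)"
  by (auto simp: r2_def dvec_def cpx1_app cpx2_app nonint_def)
lemma dv3: "nonint z \<Longrightarrow> (c,j) \<in> I \<Longrightarrow> dvec (r3 c j) z = (if z = Y c then 1 else 0) + (if z = S c j then 1 else 0)"
  by (auto simp: r3_def dvec_def cpx1_app cpx2_app nonint_def)

lemma nonint_Y: "nonint (Y c)" by (auto simp: nonint_def I_iff YU)
lemma nonint_S: "i \<le> L c \<Longrightarrow> nonint (S c i)" by (auto simp: nonint_def I_iff SU)
lemma nonint_sp: "nonint sp" by (rule nonint_S) simp

lemma GG_split: "GG R k sp x z = (\<Sum>(c,j)\<in>I.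
    k (r1 c j) * dm (fst (r1 c j)) z x * dvec (r1 c j) sp
  + k (r2 c j) * (if z = U c j then 1 else 0) * dvec (r2 c j) sp
  + k (r3 c j) * (if z = U c j then 1 else 0) * dvec (r3 c j) sp)"
  unfolding GG_def sumR by (simp add: dm2 dm3)

lemma GG_U: assumes "(c1,j1) \<in> I"
  shows "GG R k sp x (U c1 j1) = k (r2 c1 j1) * dvec (r2 c1 j1) sp + k (r3 c1 j1) * dvec (r3 c1 j1) sp"
proof -
  have z: "(c,j) \<in> I \<Longrightarrow> dm (fst (r1 c j)) (U c1 j1) x = 0" for c j
    using assms by (auto simp: dm1 I_iff UY US)
  have u: "(c,j) \<in> I \<Longrightarrow> (c,j) \<noteq> (c1,j1) \<Longrightarrow> U c1 j1 \<noteq> U c j" for c j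
    using assms by (auto simp: I_iff Uinj)
  show ?thesis unfolding GG_split
    by (subst sum_one_pt[OF finI assms]) (use z u assms in auto)
qed

lemma Lc_pos: "1 \<le> L c0" by (rule Lpos)

lemma GG_UL: "GG R k sp x (U c0 (L c0)) = k (r3 c0 (L c0))"
proof -
  have "(c0, L c0) \<in> I" using Lpos[of c0] by (simp add: I_iff)
  moreover have "L c0 - 1 \<noteq> L c0" using Lpos[of c0] by simp
  ultimately show ?thesis
    by (simp add: GG_U dv2 dv3 nonint_sp SY Sinj)
qed

lemma GG_Uj: "1 \<le> j \<Longrightarrow> j < L c0 \<Longrightarrow> GG R k sp x (U c0 j) = 0"
proof -
  assume j: "1 \<le> j" "j < L c0"
  then have "(c0, j) \<in> I" by (simp add: I_iff)
  then show ?thesis using j by (simp add: GG_U dv2 dv3 nonint_sp SY Sinj)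
qed

lemma GG_nonint: assumes "nonint z" "z \<noteq> sp" "x sp = 0"
  shows "GG R k sp x z = 0"
  unfolding GG_split
proof (rule sum.neutral, safe)
  fix c j assume cj: "(c,j) \<in> I"
  have "z \<noteq> U c j" using assms(1) cj by (simp add: nonint_def)
  moreover have "dm (fst (r1 c j)) z x * dvec (r1 c j) sp = 0"
    using cj assms ne1[OF cj] by (auto simp: dm1 dv1 nonint_sp)
  ultimately show "k (r1 c j) * dm (fst (r1 c j)) z x * dvec (r1 c j) sp
    + k (r2 c j) * (if z = U c j then 1 else 0) * dvec (r2 c j) sp
    + k (r3 c j) * (if z = U c j then 1 else 0) * dvec (r3 c j) sp = 0" by simp
qed

abbreviation "Q \<equiv> insert (Y c0) (S c0 ` {..L c0})"

lemma pairQ: assumes cj: "(c,j) \<in> I" and q: "Y c \<in> Q" "S c (j - 1) \<in> Q" shows "c = c0"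
proof -
  have jl: "j - 1 \<le> L c" using jm1[OF cj] .
  have ne: "Y c \<noteq> S c (j - 1)" using ne1[OF cj] .
  show ?thesis
  proof (cases "Y c = Y c0")
    case True
    with q ne obtain i where i: "i \<le> L c0" "S c (j - 1) = S c0 i" by auto
    then have "cpx2 (Y c) (S c (j - 1)) = cpx2 (Y c0) (S c0 i)" using True by simp
    then show ?thesis using cuniq[OF jl i(1)] by simp
  next
    case False
    with q obtain i where i: "i \<le> L c0" "Y c = S c0 i" by auto
    show ?thesis
    proof (cases "S c (j - 1) = Y c0")
      case True
      then have "cpx2 (Y c) (S c (j - 1)) = cpx2 (Y c0) (S c0 i)" using i by (simp add: cpx2_sym)
      then show ?thesis using cuniq[OF jl i(1)] by simp
    next
      case False
      with q obtain i' where i': "i' \<le> L c0" "S c (j - 1) = S c0 i'" by auto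
      have "cls (Y c) = cls (S c (j - 1))" using i i' clsS[of i c0 i'] by simp
      then show ?thesis using clsYS[OF jl] by simp
    qed
  qed
qed

lemma Y0Q: "Y c0 \<in> Q" by simp
lemma SQ: "i \<le> L c0 \<Longrightarrow> S c0 i \<in> Q" by simp

lemma GG_sp: assumes "\<And>z. nonint z \<Longrightarrow> x z \<noteq> 0 \<Longrightarrow> z = Y c0 \<or> cls z = cls sp"
  shows "GG R k sp x sp = 0"
  unfolding GG_split
proof (rule sum_zero_pt)
  fix c j assume cj: "(c,j) \<in> I"
  have jl: "j - 1 \<le> L c" using jm1[OF cj] .
  have u: "sp \<noteq> U c j" using cj by (simp add: I_iff SU)
  have "dm (fst (r1 c j)) sp x = 0"
  proof (cases "sp = Y c")
    case True
    have "x (S c (j - 1)) = 0"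
    proof (rule ccontr)
      assume "x (S c (j - 1)) \<noteq> 0"
      then have "S c (j - 1) = Y c0 \<or> cls (S c (j - 1)) = cls sp" using assms nonint_S[OF jl] by blast
      then show False
      proof
        assume h: "S c (j - 1) = Y c0"
        have "Y c \<in> Q" unfolding True[symmetric] by simp
        moreover have "S c (j - 1) \<in> Q" using h by simp
        ultimately have "c = c0" using pairQ[OF cj] by blast
        then show False using True YS[of "L c0" c0] by simp
      next
        assume "cls (S c (j - 1)) = cls sp"
        then show False using True clsYS[OF jl] by simp
      qed
    qed
    then show ?thesis using cj True by (simp add: dm1)
  next
    case False
    have "sp \<noteq> S c (j - 1) \<or> x (Y c) = 0"
    proof (rule ccontr)
      assume "\<not> ?thesis"
      then have sp: "sp = S c (j - 1)" and "x (Y c) \<noteq> 0" by auto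
      then have "Y c = Y c0 \<or> cls (Y c) = cls sp" using assms nonint_Y by blast
      then show False
      proof
        assume "Y c = Y c0"
        then have "c = c0" using pairQ[OF cj] sp by (metis Y0Q SQ order_refl)
        then show False using sp cj Sinj[of "j - 1" c0 "L c0"] jl by (auto simp: I_iff)
      next
        assume "cls (Y c) = cls sp"
        then show False using sp clsYS[OF jl] by simp
      qed
    qed
    then show ?thesis using cj False by (auto simp: dm1)
  qed
  then show "k (r1 c j) * dm (fst (r1 c j)) sp x * dvec (r1 c j) sp
    + k (r2 c j) * (if sp = U c j then 1 else 0) * dvec (r2 c j) sp
    + k (r3 c j) * (if sp = U c j then 1 else 0) * dvec (r3 c j) sp = 0" using u by simp
qed

lemma HH_zero: assumes "a \<noteq> sp" "i \<noteq> sp" shows "HH R k sp x a i = 0"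
  unfolding HH_def sumR
proof (rule sum_zero_pt)
  fix c j assume cj: "(c,j) \<in> I"
  show "k (r1 c j) * d2m (fst (r1 c j)) i a x * dvec (r1 c j) sp +
        k (r2 c j) * d2m (fst (r2 c j)) i a x * dvec (r2 c j) sp +
        k (r3 c j) * d2m (fst (r3 c j)) i a x * dvec (r3 c j) sp = 0"
    using assms cj by (auto simp: d2m1 d2m2 d2m3 dv1 nonint_sp)
qed

lemma EXP_mon: "(\<Sum>r\<in>R. k r * monom x (fst r) * h r) = (\<Sum>(c,j)\<in>I.
    k (r1 c j) * (x (Y c) * x (S c (j - 1))) * h (r1 c j)
  + k (r2 c j) * x (U c j) * h (r2 c j) + k (r3 c j) * x (U c j) * h (r3 c j))"
  unfolding sumR by (rule sum.cong) (auto simp: mon1 mon2 mon3)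

lemma EXP_dm: "(\<Sum>r\<in>R. k r * dm (fst r) a x * h r) = (\<Sum>(c,j)\<in>I.
    k (r1 c j) * dm (fst (r1 c j)) a x * h (r1 c j)
  + k (r2 c j) * (if a = U c j then 1 else 0) * h (r2 c j)
  + k (r3 c j) * (if a = U c j then 1 else 0) * h (r3 c j))"
  unfolding sumR by (rule sum.cong) (auto simp: dm2 dm3)

definition "D3 k x a = (\<Sum>r\<in>R. k r * monom x (fst r) * CV (\<lambda>i. HH R k sp x a i) r)
   + (\<Sum>r\<in>R. k r * dm (fst r) a x * CV (GG R k sp x) r)"

lemma E1: "iterder R k 1 (\<lambda>x. x sp) x = (\<Sum>r\<in>R. k r * monom x (fst r) * dvec r sp)"
  by (simp only: iter1 ma_dvec)

lemma E2: "iterder R k 2 (\<lambda>x. x sp) x = (\<Sum>r\<in>R. k r * monom x (fst r) * CV (GG R k sp x) r)"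
  by (simp add: iter2[OF finR] swap_ma)

lemma E3: "iterder R k 3 (\<lambda>x. x sp) x = (\<Sum>r\<in>R. k r * monom x (fst r) * CV (D3 k x) r)"
proof -
  have "\<And>a. (\<Sum>i\<in>UNIV. HH R k sp x a i * massaction R k x i + GG R k sp x i * JJ R k x a i) = D3 k x a"
    by (simp add: D3_def sum.distrib swap_ma swap_JJ)
  then show ?thesis by (simp add: iter3[OF finR] swap_ma)
qed


lemma pt_app: "pt P z = (if z \<in> P then 1 else 0)" by (simp add: pt_def)

lemma I0: "(c0, L c0) \<in> I" using Lpos[of c0] by (simp add: I_iff)
lemma Lm1: "L c0 - 1 \<le> L c0" by simp
lemma Lm1_ne: "L c0 - 1 \<noteq> L c0" using Lpos[of c0] by simp
lemma SLm1_ne: "S c0 (L c0 - 1) \<noteq> sp" using Sinj[OF Lm1, of "L c0"] Lm1_ne by simp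
lemma Ssub: "(c0,j) \<in> I \<Longrightarrow> i \<le> L c0 \<Longrightarrow> S c0 (j - 1) = S c0 i \<longleftrightarrow> j = i + 1"
  using Sinj[OF jm1, of c0 j i] unfolding I_iff by auto

lemma V1: "iterder R k 1 (\<lambda>x. x sp) (pt {U c0 (L c0)}) = k (r3 c0 (L c0))"
proof -
  let ?x = "pt {U c0 (L c0)}"
  have a: "\<And>c j. (c,j) \<in> I \<Longrightarrow> ?x (Y c) = 0" using I0 by (auto simp: pt_app I_iff YU)
  have b: "\<And>c j. (c,j) \<in> I \<Longrightarrow> ?x (U c j) = (if (c,j) = (c0, L c0) then 1 else 0)"
    using I0 by (auto simp: pt_app I_iff Uinj)
  have "iterder R k 1 (\<lambda>x. x sp) ?x = (\<Sum>(c,j)\<in>I.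
    k (r1 c j) * (?x (Y c) * ?x (S c (j - 1))) * dvec (r1 c j) sp
  + k (r2 c j) * ?x (U c j) * dvec (r2 c j) sp + k (r3 c j) * ?x (U c j) * dvec (r3 c j) sp)"
    by (simp only: E1 EXP_mon)
  also have "\<dots> = k (r3 c0 (L c0))"
  proof (rule trans[OF sum_one_pt[OF finI I0]], goal_cases)
    case (1 c j)
    then have "?x (Y c) = 0" "?x (U c j) = 0" using a b by auto
    then show ?case by simp
  next
    case 2 show ?case using a b I0 SLm1_ne SY[of "L c0" c0] by (simp add: dv2 dv3 nonint_sp)
  qed
  finally show ?thesis .
qed

lemma V2a: "iterder R k 2 (\<lambda>x. x sp) (pt {U c0 (L c0)}) = - (k (r2 c0 (L c0)) + k (r3 c0 (L c0))) * k (r3 c0 (L c0))"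
proof -
  let ?x = "pt {U c0 (L c0)}"
  let ?G = "GG R k sp ?x"
  have a: "\<And>c j. (c,j) \<in> I \<Longrightarrow> ?x (Y c) = 0" using I0 by (auto simp: pt_app I_iff YU)
  have b: "\<And>c j. (c,j) \<in> I \<Longrightarrow> ?x (U c j) = (if (c,j) = (c0, L c0) then 1 else 0)"
    using I0 by (auto simp: pt_app I_iff Uinj)
  have xsp: "?x sp = 0" using I0 by (auto simp: pt_app I_iff SU)
  have g1: "?G (Y c0) = 0" by (rule GG_nonint[OF nonint_Y]) (use xsp SY[of "L c0" c0] in auto)
  have g2: "?G (S c0 (L c0 - 1)) = 0" by (rule GG_nonint[OF nonint_S[OF Lm1]]) (use xsp SLm1_ne in auto)
  have g3: "?G sp = 0" by (rule GG_sp) (auto simp: pt_app nonint_def I0)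
  have g4: "?G (U c0 (L c0)) = k (r3 c0 (L c0))" by (rule GG_UL)
  have "iterder R k 2 (\<lambda>x. x sp) ?x = (\<Sum>(c,j)\<in>I.
    k (r1 c j) * (?x (Y c) * ?x (S c (j - 1))) * CV ?G (r1 c j)
  + k (r2 c j) * ?x (U c j) * CV ?G (r2 c j) + k (r3 c j) * ?x (U c j) * CV ?G (r3 c j))"
    by (simp only: E2 EXP_mon)
  also have "\<dots> = k (r2 c0 (L c0)) * CV ?G (r2 c0 (L c0)) + k (r3 c0 (L c0)) * CV ?G (r3 c0 (L c0))"
  proof (rule trans[OF sum_one_pt[OF finI I0]], goal_cases)
    case (1 c j)
    then have "?x (Y c) = 0" "?x (U c j) = 0" using a b by auto
    then show ?case by simp
  next
    case 2 show ?case using a b I0 by simp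
  qed
  also have "\<dots> = - (k (r2 c0 (L c0)) + k (r3 c0 (L c0))) * k (r3 c0 (L c0))"
    by (simp only: CV2 CV3 g1 g2 g3 g4) (simp add: algebra_simps)
  finally show ?thesis .
qed

lemma V2b: "iterder R k 2 (\<lambda>x. x sp) (pt {Y c0, S c0 (L c0 - 1)}) = k (r1 c0 (L c0)) * k (r3 c0 (L c0))"
proof -
  let ?x = "pt {Y c0, S c0 (L c0 - 1)}"
  let ?G = "GG R k sp ?x"
  have b: "\<And>c j. (c,j) \<in> I \<Longrightarrow> ?x (U c j) = 0"
    using Lm1 by (auto simp: pt_app I_iff UY US)
  have a: "?x (Y c) * ?x (S c (j - 1)) = (if (c,j) = (c0, L c0) then 1 else 0)" if cj: "(c,j) \<in> I" for c j
  proof (cases "?x (Y c) * ?x (S c (j - 1)) = 0")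
    case False
    then have m: "Y c \<in> {Y c0, S c0 (L c0 - 1)}" "S c (j - 1) \<in> {Y c0, S c0 (L c0 - 1)}"
      by (auto simp: pt_app split: if_splits)
    then have "c = c0" using pairQ[OF cj] Lm1 by blast
    then have "S c0 (j - 1) = S c0 (L c0 - 1)" using m(2) ne1[OF cj] by auto
    then have "j = L c0" using Ssub[OF _ Lm1] cj \<open>c = c0\<close> Lpos[of c0] by auto
    then show ?thesis using False \<open>c = c0\<close> by (auto simp: pt_app)
  next
    case True
    then show ?thesis using I0 ne1[OF I0] SY[OF Lm1] by (auto simp: pt_app)
  qed
  have xsp: "?x sp = 0" using SLm1_ne SY[of "L c0" c0] by (auto simp: pt_app)
  have g1: "?G (Y c0) = 0" by (rule GG_nonint[OF nonint_Y]) (use xsp SY[of "L c0" c0] in auto)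
  have g2: "?G (S c0 (L c0 - 1)) = 0" by (rule GG_nonint[OF nonint_S[OF Lm1]]) (use xsp SLm1_ne in auto)
  have g4: "?G (U c0 (L c0)) = k (r3 c0 (L c0))" by (rule GG_UL)
  have "iterder R k 2 (\<lambda>x. x sp) ?x = (\<Sum>(c,j)\<in>I.
    k (r1 c j) * (?x (Y c) * ?x (S c (j - 1))) * CV ?G (r1 c j)
  + k (r2 c j) * ?x (U c j) * CV ?G (r2 c j) + k (r3 c j) * ?x (U c j) * CV ?G (r3 c j))"
    by (simp only: E2 EXP_mon)
  also have "\<dots> = k (r1 c0 (L c0)) * CV ?G (r1 c0 (L c0))"
  proof (rule trans[OF sum_one_pt[OF finI I0]], goal_cases)
    case (1 c j)
    then have "?x (Y c) * ?x (S c (j - 1)) = 0" "?x (U c j) = 0" using a b by auto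
    then show ?case by simp
  next
    case 2 show ?case using a b I0 by simp
  qed
  also have "\<dots> = k (r1 c0 (L c0)) * k (r3 c0 (L c0))"
    by (simp only: CV1[OF I0] g1 g2 g4) simp
  finally show ?thesis .
qed


lemma EXP_dm_U: assumes "(c1,j1) \<in> I"
  shows "(\<Sum>r\<in>R. k r * dm (fst r) (U c1 j1) x * h r) = k (r2 c1 j1) * h (r2 c1 j1) + k (r3 c1 j1) * h (r3 c1 j1)"
proof -
  have z: "\<And>c j. (c,j) \<in> I \<Longrightarrow> dm (fst (r1 c j)) (U c1 j1) x = 0"
    using assms by (auto simp: dm1 I_iff UY US)
  have u: "\<And>c j. (c,j) \<in> I \<Longrightarrow> (c,j) \<noteq> (c1,j1) \<Longrightarrow> U c1 j1 \<noteq> U c j"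
    using assms by (auto simp: I_iff Uinj)
  show ?thesis unfolding EXP_dm
  proof (rule trans[OF sum_one_pt[OF finI assms]], goal_cases)
    case (1 c j) then show ?case using z u by simp
  next
    case 2 show ?case using z assms by simp
  qed
qed

lemma dm1_zero_ne: assumes cj: "(c,j) \<in> I" and a: "a \<in> Q" and sup: "\<forall>z. nonint z \<longrightarrow> x z \<noteq> 0 \<longrightarrow> z \<in> Q"
  and ne: "c \<noteq> c0"
  shows "dm (fst (r1 c j)) a x = 0"
proof (rule ccontr)
  assume h: "dm (fst (r1 c j)) a x \<noteq> 0"
  have jl: "j - 1 \<le> L c" using jm1[OF cj] .
  from h have "(a = Y c \<and> x (S c (j - 1)) \<noteq> 0) \<or> (a = S c (j - 1) \<and> x (Y c) \<noteq> 0)"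
    using cj by (auto simp: dm1 split: if_splits)
  then show False
  proof
    assume "a = Y c \<and> x (S c (j - 1)) \<noteq> 0"
    then have "Y c \<in> Q" "S c (j - 1) \<in> Q" using a sup nonint_S[OF jl] by auto
    then show False using pairQ[OF cj] ne by blast
  next
    assume "a = S c (j - 1) \<and> x (Y c) \<noteq> 0"
    then have "Y c \<in> Q" "S c (j - 1) \<in> Q" using a sup nonint_Y by auto
    then show False using pairQ[OF cj] ne by blast
  qed
qed

lemma EXP_dm_Q: assumes a: "a \<in> Q" and sup: "\<forall>z. nonint z \<longrightarrow> x z \<noteq> 0 \<longrightarrow> z \<in> Q"
  shows "(\<Sum>r\<in>R. k r * dm (fst r) a x * h r) = (\<Sum>(c,j)\<in>I. if c = c0 then
     k (r1 c j) * (if a = Y c0 then x (S c0 (j - 1)) else if a = S c0 (j - 1) then x (Y c0) else 0) * h (r1 c j) else 0)"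
  unfolding EXP_dm
proof (rule sum.cong[OF refl], clarify)
  fix c j assume cj: "(c,j) \<in> I"
  have na: "\<And>c' j'. (c',j') \<in> I \<Longrightarrow> a \<noteq> U c' j'"
    using a by (auto simp: I_iff UY US)
  show "k (r1 c j) * dm (fst (r1 c j)) a x * h (r1 c j) + k (r2 c j) * (if a = U c j then 1 else 0) * h (r2 c j) +
        k (r3 c j) * (if a = U c j then 1 else 0) * h (r3 c j) =
        (if c = c0 then k (r1 c j) * (if a = Y c0 then x (S c0 (j - 1)) else if a = S c0 (j - 1) then x (Y c0) else 0) * h (r1 c j) else 0)"
  proof (cases "c = c0")
    case True then show ?thesis using na[OF cj] cj by (simp add: dm1)
  next
    case False then show ?thesis using na[OF cj] dm1_zero_ne[OF cj a sup False] by simp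
  qed
qed


lemma ysp: "Y c0 \<noteq> sp" using SY[of "L c0" c0] by auto

lemma Sj_ne_sp: "j < L c0 \<Longrightarrow> S c0 j \<noteq> sp" using Sinj[of j c0 "L c0"] by simp
lemma Sj1_ne_sp: "j < L c0 \<Longrightarrow> S c0 (j - 1) \<noteq> sp" using Sinj[of "j - 1" c0 "L c0"] by simp

lemma V3a: assumes j0: "1 \<le> j0" "j0 < L c0"
  shows "iterder R k 3 (\<lambda>x. x sp) (pt {U c0 j0, S c0 (L c0 - 1)})
    = (k (r2 c0 j0) + k (r3 c0 j0)) * (k (r1 c0 (L c0)) * k (r3 c0 (L c0)))"
proof -
  let ?P = "{U c0 j0, S c0 (L c0 - 1)}"
  let ?x = "pt ?P"
  let ?G = "GG R k sp ?x"
  let ?D = "D3 k ?x"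
  have I1: "(c0,j0) \<in> I" using j0 by (simp add: I_iff)
  have sup: "\<forall>z. nonint z \<longrightarrow> ?x z \<noteq> 0 \<longrightarrow> z \<in> Q"
  proof (intro allI impI)
    fix z assume "nonint z" "?x z \<noteq> 0"
    then have "z = S c0 (L c0 - 1)" using I1 by (auto simp: pt_app nonint_def split: if_splits)
    then show "z \<in> Q" using Lm1 by simp
  qed
  have m0: "?x (Y c) * ?x (S c (j - 1)) = 0" if cj: "(c,j) \<in> I" for c j
  proof (rule ccontr)
    assume "?x (Y c) * ?x (S c (j - 1)) \<noteq> 0"
    then have "Y c \<in> ?P" "S c (j - 1) \<in> ?P" by (auto simp: pt_app split: if_splits)
    moreover have "Y c \<noteq> U c0 j0" "S c (j - 1) \<noteq> U c0 j0" using I1 jm1[OF cj] by (auto simp: I_iff YU SU)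
    ultimately have "Y c = S c (j - 1)" by auto
    then show False using ne1[OF cj] by simp
  qed
  have u0: "?x (U c j) = (if (c,j) = (c0,j0) then 1 else 0)" if cj: "(c,j) \<in> I" for c j
    using cj I1 Lm1 by (auto simp: pt_app I_iff Uinj US)
  have SM: "\<And>h. (\<Sum>r\<in>R. k r * monom ?x (fst r) * h r) = k (r2 c0 j0) * h (r2 c0 j0) + k (r3 c0 j0) * h (r3 c0 j0)"
  proof -
    fix h
    show "(\<Sum>r\<in>R. k r * monom ?x (fst r) * h r) = k (r2 c0 j0) * h (r2 c0 j0) + k (r3 c0 j0) * h (r3 c0 j0)"
      unfolding EXP_mon
    proof (rule trans[OF sum_one_pt[OF finI I1]], goal_cases)
      case (1 c j)
      then have "?x (Y c) * ?x (S c (j - 1)) = 0" "?x (U c j) = 0" using m0 u0 by auto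
      then show ?case by simp
    next
      case 2 show ?case using m0[OF I1] u0[OF I1] by simp
    qed
  qed
  have xsp: "?x sp = 0" using SLm1_ne I1 by (auto simp: pt_app I_iff SU)
  have sj1: "j0 - 1 \<le> L c0" "j0 \<le> L c0" using j0 by auto
  have g1: "?G (Y c0) = 0" by (rule GG_nonint[OF nonint_Y]) (use xsp SY[of "L c0" c0] in auto)
  have g2: "?G (S c0 (j0 - 1)) = 0" by (rule GG_nonint[OF nonint_S[OF sj1(1)]]) (use xsp Sj1_ne_sp[OF j0(2)] in auto)
  have g3: "?G (S c0 j0) = 0" by (rule GG_nonint[OF nonint_S[OF sj1(2)]]) (use xsp Sj_ne_sp[OF j0(2)] in auto)
  have g4: "?G (U c0 j0) = 0" by (rule GG_Uj[OF j0])
  have g5: "?G (U c0 (L c0)) = k (r3 c0 (L c0))" by (rule GG_UL)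
  have g6: "?G (S c0 (L c0 - 1)) = 0" by (rule GG_nonint[OF nonint_S[OF Lm1]]) (use xsp SLm1_ne in auto)
  have P1: "(\<Sum>r\<in>R. k r * monom ?x (fst r) * CV (\<lambda>i. HH R k sp ?x a i) r) = 0" if "a \<noteq> sp" for a
    unfolding SM CV2 CV3
    using that SY[of "L c0" c0] Sj1_ne_sp[OF j0(2)] Sj_ne_sp[OF j0(2)] SU[OF I1[unfolded I_iff, THEN conjunct1] I1[unfolded I_iff, THEN conjunct2], of "L c0" c0]
    by (simp add: HH_zero)
  have uj: "U c0 j0 \<noteq> sp" using I1 by (simp add: I_iff US)
  have d1: "?D (U c0 j0) = 0"
    unfolding D3_def P1[OF uj] EXP_dm_U[OF I1] CV2 CV3 g1 g2 g3 g4 by simp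
  have d2: "?D (Y c0) = k (r1 c0 (L c0)) * k (r3 c0 (L c0))"
  proof -
    have "(\<Sum>r\<in>R. k r * dm (fst r) (Y c0) ?x * CV ?G r) = k (r1 c0 (L c0)) * CV ?G (r1 c0 (L c0))"
      unfolding EXP_dm_Q[OF Y0Q sup]
    proof (rule trans[OF sum_one_pt[OF finI I0]], goal_cases)
      case (1 c j)
      show ?case
      proof (cases "c = c0")
        case True
        then have "j \<noteq> L c0" using 1 by simp
        then have "S c0 (j - 1) \<noteq> S c0 (L c0 - 1)" using Ssub[OF _ Lm1, of j] 1 True Lpos[of c0] by auto
        moreover have "S c0 (j - 1) \<noteq> U c0 j0" using SU[of j0 c0 "j - 1" c0] jm1[of c0 j] 1 True j0 by auto
        ultimately show ?thesis using True by (auto simp: pt_app)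
      qed simp
    next
      case 2 show ?case using Lm1 by (simp add: pt_app)
    qed
    then show ?thesis unfolding D3_def P1[OF ysp] CV1[OF I0] g5 g1 g6 by simp
  qed
  have d3: "?D (S c0 i) = 0" if i: "i \<le> L c0" "S c0 i \<noteq> sp" for i
  proof -
    have "(\<Sum>r\<in>R. k r * dm (fst r) (S c0 i) ?x * CV ?G r) = 0"
      unfolding EXP_dm_Q[OF SQ[OF i(1)] sup]
      by (rule sum_zero_pt) (use I1 SY[OF i(1)] YU[OF j0(1) less_imp_le[OF j0(2)], of c0] YS[OF Lm1] in \<open>auto simp: pt_app\<close>)
    then show ?thesis unfolding D3_def P1[OF i(2)] by simp
  qed
  have "iterder R k 3 (\<lambda>x. x sp) ?x = k (r2 c0 j0) * CV ?D (r2 c0 j0) + k (r3 c0 j0) * CV ?D (r3 c0 j0)"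
    by (simp only: E3 SM)
  also have "\<dots> = (k (r2 c0 j0) + k (r3 c0 j0)) * (k (r1 c0 (L c0)) * k (r3 c0 (L c0)))"
    unfolding CV2 CV3 d1 d2 d3[OF sj1(1) Sj1_ne_sp[OF j0(2)]] d3[OF sj1(2) Sj_ne_sp[OF j0(2)]]
    by (simp add: algebra_simps)
  finally show ?thesis .
qed


lemma V3b: assumes j0: "1 \<le> j0" "j0 < L c0"
  shows "iterder R k 3 (\<lambda>x. x sp) (pt {Y c0, S c0 (L c0 - 1), S c0 (j0 - 1)})
    = - (k (r1 c0 (L c0)) * k (r3 c0 (L c0))) * (k (r2 c0 (L c0)) + k (r3 c0 (L c0)) + 2 * k (r1 c0 (L c0)) + k (r1 c0 j0))"
proof -
  let ?P = "{Y c0, S c0 (L c0 - 1), S c0 (j0 - 1)}"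
  let ?x = "pt ?P"
  let ?G = "GG R k sp ?x"
  let ?D = "D3 k ?x"
  have I1: "(c0,j0) \<in> I" using j0 by (simp add: I_iff)
  have sj1: "j0 - 1 \<le> L c0" "j0 \<le> L c0" using j0 by auto
  have jne: "(c0, L c0) \<noteq> (c0, j0)" using j0 by simp
  have SS: "S c0 (j0 - 1) \<noteq> S c0 (L c0 - 1)" using Sinj[OF sj1(1) Lm1] j0 by simp
  have PQ: "?P \<subseteq> Q" using sj1 Lm1 by auto
  have sup: "\<forall>z. nonint z \<longrightarrow> ?x z \<noteq> 0 \<longrightarrow> z \<in> Q"
    using PQ by (auto simp: pt_app split: if_splits)
  have mon: "?x (Y c) * ?x (S c (j - 1)) = (if (c,j) = (c0, L c0) \<or> (c,j) = (c0,j0) then 1 else 0)"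
    if cj: "(c,j) \<in> I" for c j
  proof (cases "?x (Y c) * ?x (S c (j - 1)) = 0")
    case False
    then have m: "Y c \<in> ?P" "S c (j - 1) \<in> ?P" by (auto simp: pt_app split: if_splits)
    then have "c = c0" using pairQ[OF cj] PQ by blast
    then have "S c0 (j - 1) = S c0 (L c0 - 1) \<or> S c0 (j - 1) = S c0 (j0 - 1)" using m(2) ne1[OF cj] by auto
    then have "j = L c0 \<or> j = j0" using Ssub[OF _ Lm1, of j] Ssub[OF _ sj1(1), of j] cj \<open>c = c0\<close> Lpos[of c0] j0 by auto
    then show ?thesis using False \<open>c = c0\<close> by (auto simp: pt_app)
  next
    case True
    have "?x (Y c0) * ?x (S c0 (L c0 - 1)) = 1" "?x (Y c0) * ?x (S c0 (j0 - 1)) = 1" by (auto simp: pt_app)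
    then show ?thesis using True by auto
  qed
  have u0: "?x (U c j) = 0" if cj: "(c,j) \<in> I" for c j
    using cj Lm1 sj1 by (auto simp: pt_app I_iff UY US)
  have SM: "\<And>h. (\<Sum>r\<in>R. k r * monom ?x (fst r) * h r) = k (r1 c0 (L c0)) * h (r1 c0 (L c0)) + k (r1 c0 j0) * h (r1 c0 j0)"
  proof -
    fix h
    show "(\<Sum>r\<in>R. k r * monom ?x (fst r) * h r) = k (r1 c0 (L c0)) * h (r1 c0 (L c0)) + k (r1 c0 j0) * h (r1 c0 j0)"
      unfolding EXP_mon
    proof (rule trans[OF sum_two_pt[OF finI I0 I1 jne]], goal_cases)
      case (1 c j)
      then have "?x (Y c) * ?x (S c (j - 1)) = 0" "?x (U c j) = 0" using mon u0 by auto
      then show ?case by simp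
    next
      case 2 show ?case using mon[OF I0] mon[OF I1] u0[OF I0] u0[OF I1] by simp
    qed
  qed
  have xsp: "?x sp = 0" using SLm1_ne ysp Sj1_ne_sp[OF j0(2)] by (auto simp: pt_app)
  have g1: "?G (Y c0) = 0" by (rule GG_nonint[OF nonint_Y]) (use xsp ysp in auto)
  have g2: "?G (S c0 (j0 - 1)) = 0" by (rule GG_nonint[OF nonint_S[OF sj1(1)]]) (use xsp Sj1_ne_sp[OF j0(2)] in auto)
  have g3: "?G (S c0 j0) = 0" by (rule GG_nonint[OF nonint_S[OF sj1(2)]]) (use xsp Sj_ne_sp[OF j0(2)] in auto)
  have g4: "?G (U c0 j0) = 0" by (rule GG_Uj[OF j0])
  have g5: "?G (U c0 (L c0)) = k (r3 c0 (L c0))" by (rule GG_UL)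
  have g6: "?G (S c0 (L c0 - 1)) = 0" by (rule GG_nonint[OF nonint_S[OF Lm1]]) (use xsp SLm1_ne in auto)
  have g7: "?G sp = 0"
  proof (rule GG_sp)
    fix z assume "nonint z" "?x z \<noteq> 0"
    then have "z \<in> ?P" by (auto simp: pt_app split: if_splits)
    then show "z = Y c0 \<or> cls z = cls sp" using clsS[OF Lm1, of "L c0"] clsS[OF sj1(1), of "L c0"] by auto
  qed
  have ULsp: "U c0 (L c0) \<noteq> sp" using I0 by (simp add: I_iff US)
  have Ujsp: "U c0 j0 \<noteq> sp" using I1 by (simp add: I_iff US)
  have P1: "(\<Sum>r\<in>R. k r * monom ?x (fst r) * CV (\<lambda>i. HH R k sp ?x a i) r) = 0" if "a \<noteq> sp" for a
    unfolding SM CV1[OF I0] CV1[OF I1]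
    using that ysp SLm1_ne Sj1_ne_sp[OF j0(2)] ULsp Ujsp by (simp add: HH_zero)
  have d1: "?D (U c0 (L c0)) = - (k (r2 c0 (L c0)) + k (r3 c0 (L c0))) * k (r3 c0 (L c0))"
    unfolding D3_def P1[OF ULsp] EXP_dm_U[OF I0] CV2 CV3 g1 g5 g6 g7 by (simp add: algebra_simps)
  have d2: "?D (U c0 j0) = 0"
    unfolding D3_def P1[OF Ujsp] EXP_dm_U[OF I1] CV2 CV3 g1 g2 g3 g4 by simp
  have d3: "?D (Y c0) = k (r1 c0 (L c0)) * k (r3 c0 (L c0))"
  proof -
    have "(\<Sum>r\<in>R. k r * dm (fst r) (Y c0) ?x * CV ?G r) = k (r1 c0 (L c0)) * CV ?G (r1 c0 (L c0)) + k (r1 c0 j0) * CV ?G (r1 c0 j0)"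
      unfolding EXP_dm_Q[OF Y0Q sup]
    proof (rule trans[OF sum_two_pt[OF finI I0 I1 jne]], goal_cases)
      case (1 c j)
      show ?case
      proof (cases "c = c0")
        case True
        then have "j \<noteq> L c0" "j \<noteq> j0" using 1 by auto
        then have "S c0 (j - 1) \<noteq> S c0 (L c0 - 1)" "S c0 (j - 1) \<noteq> S c0 (j0 - 1)"
          using Ssub[OF _ Lm1, of j] Ssub[OF _ sj1(1), of j] 1 True Lpos[of c0] j0 by auto
        moreover have "S c0 (j - 1) \<noteq> Y c0" using SY[OF jm1[of c0 j]] 1 True by auto
        ultimately show ?thesis using True by (auto simp: pt_app)
      qed simp
    next
      case 2 show ?case by (simp add: pt_app)
    qed
    then show ?thesis unfolding D3_def P1[OF ysp] CV1[OF I0] CV1[OF I1] g5 g1 g6 g4 g2 by simp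
  qed
  have d4: "?D (S c0 (L c0 - 1)) = k (r1 c0 (L c0)) * k (r3 c0 (L c0))"
  proof -
    have "(\<Sum>r\<in>R. k r * dm (fst r) (S c0 (L c0 - 1)) ?x * CV ?G r) = k (r1 c0 (L c0)) * CV ?G (r1 c0 (L c0))"
      unfolding EXP_dm_Q[OF SQ[OF Lm1] sup]
    proof (rule trans[OF sum_one_pt[OF finI I0]], goal_cases)
      case (1 c j)
      show ?case
      proof (cases "c = c0")
        case True
        then have "j \<noteq> L c0" using 1 by auto
        then have "S c0 (L c0 - 1) \<noteq> S c0 (j - 1)" using Ssub[OF _ Lm1, of j] 1 True Lpos[of c0] by auto
        then show ?thesis using True YS[OF Lm1] by auto
      qed simp
    next
      case 2 show ?case using YS[OF Lm1] by (simp add: pt_app)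
    qed
    then show ?thesis unfolding D3_def P1[OF SLm1_ne] CV1[OF I0] g5 g1 g6 by simp
  qed
  have d5: "?D (S c0 (j0 - 1)) = 0"
  proof -
    have "(\<Sum>r\<in>R. k r * dm (fst r) (S c0 (j0 - 1)) ?x * CV ?G r) = k (r1 c0 j0) * CV ?G (r1 c0 j0)"
      unfolding EXP_dm_Q[OF SQ[OF sj1(1)] sup]
    proof (rule trans[OF sum_one_pt[OF finI I1]], goal_cases)
      case (1 c j)
      show ?case
      proof (cases "c = c0")
        case True
        then have "j \<noteq> j0" using 1 by auto
        then have "S c0 (j0 - 1) \<noteq> S c0 (j - 1)" using Ssub[OF _ sj1(1), of j] 1 True j0 by auto
        then show ?thesis using True YS[OF sj1(1)] by auto
      qed simp
    next
      case 2 show ?case using YS[OF sj1(1)] by (simp add: pt_app)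
    qed
    then show ?thesis unfolding D3_def P1[OF Sj1_ne_sp[OF j0(2)]] CV1[OF I1] g4 g1 g2 by simp
  qed
  have "iterder R k 3 (\<lambda>x. x sp) ?x = k (r1 c0 (L c0)) * CV ?D (r1 c0 (L c0)) + k (r1 c0 j0) * CV ?D (r1 c0 j0)"
    by (simp only: E3 SM)
  also have "\<dots> = - (k (r1 c0 (L c0)) * k (r3 c0 (L c0))) * (k (r2 c0 (L c0)) + k (r3 c0 (L c0)) + 2 * k (r1 c0 (L c0)) + k (r1 c0 j0))"
    unfolding CV1[OF I0] CV1[OF I1] d1 d2 d3 d4 d5
    by (simp add: algebra_simps)
  finally show ?thesis .
qed


lemma inR: "(c,j) \<in> I \<Longrightarrow> r1 c j \<in> R \<and> r2 c j \<in> R \<and> r3 c j \<in> R"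
  by (auto simp: memR)

lemma id_L:
  assumes pos1: "\<forall>r\<in>R. 0 < k1 r" and pos2: "\<forall>r\<in>R. 0 < k2 r"
    and e1: "iterder R k1 1 (\<lambda>x. x sp) = iterder R k2 1 (\<lambda>x. x sp)"
    and e2: "iterder R k1 2 (\<lambda>x. x sp) = iterder R k2 2 (\<lambda>x. x sp)"
  shows "k1 (r1 c0 (L c0)) = k2 (r1 c0 (L c0)) \<and> k1 (r2 c0 (L c0)) = k2 (r2 c0 (L c0)) \<and> k1 (r3 c0 (L c0)) = k2 (r3 c0 (L c0))"
proof -
  have c: "k1 (r3 c0 (L c0)) = k2 (r3 c0 (L c0))"
    using fun_cong[OF e1, of "pt {U c0 (L c0)}"] by (simp only: V1)
  have cpos: "0 < k1 (r3 c0 (L c0))" using pos1 inR[OF I0] by blast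
  have "- (k1 (r2 c0 (L c0)) + k1 (r3 c0 (L c0))) * k1 (r3 c0 (L c0)) = - (k2 (r2 c0 (L c0)) + k2 (r3 c0 (L c0))) * k2 (r3 c0 (L c0))"
    using fun_cong[OF e2, of "pt {U c0 (L c0)}"] by (simp only: V2a)
  then have b: "k1 (r2 c0 (L c0)) = k2 (r2 c0 (L c0))" using c cpos by simp
  have "k1 (r1 c0 (L c0)) * k1 (r3 c0 (L c0)) = k2 (r1 c0 (L c0)) * k2 (r3 c0 (L c0))"
    using fun_cong[OF e2, of "pt {Y c0, S c0 (L c0 - 1)}"] by (simp only: V2b)
  then have a: "k1 (r1 c0 (L c0)) = k2 (r1 c0 (L c0))" using c cpos by simp
  show ?thesis using a b c by simp
qed

lemma id_j:
  assumes pos1: "\<forall>r\<in>R. 0 < k1 r" and pos2: "\<forall>r\<in>R. 0 < k2 r"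
    and e1: "iterder R k1 1 (\<lambda>x. x sp) = iterder R k2 1 (\<lambda>x. x sp)"
    and e2: "iterder R k1 2 (\<lambda>x. x sp) = iterder R k2 2 (\<lambda>x. x sp)"
    and e3: "iterder R k1 3 (\<lambda>x. x sp) = iterder R k2 3 (\<lambda>x. x sp)"
    and j0: "1 \<le> j0" "j0 < L c0"
  shows "k1 (r1 c0 j0) = k2 (r1 c0 j0) \<and> k1 (r2 c0 j0) + k1 (r3 c0 j0) = k2 (r2 c0 j0) + k2 (r3 c0 j0)"
proof -
  have L: "k1 (r1 c0 (L c0)) = k2 (r1 c0 (L c0))" "k1 (r2 c0 (L c0)) = k2 (r2 c0 (L c0))" "k1 (r3 c0 (L c0)) = k2 (r3 c0 (L c0))"
    using id_L[OF pos1 pos2 e1 e2] by auto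
  have "0 < k1 (r1 c0 (L c0))" "0 < k1 (r3 c0 (L c0))" using pos1 inR[OF I0] by blast+
  then have pp: "0 < k1 (r1 c0 (L c0)) * k1 (r3 c0 (L c0))" by simp
  have q2: "0 < k2 (r1 c0 (L c0))" "0 < k2 (r3 c0 (L c0))" using pos2 inR[OF I0] by blast+
  have "(k1 (r2 c0 j0) + k1 (r3 c0 j0)) * (k1 (r1 c0 (L c0)) * k1 (r3 c0 (L c0)))
      = (k2 (r2 c0 j0) + k2 (r3 c0 j0)) * (k2 (r1 c0 (L c0)) * k2 (r3 c0 (L c0)))"
    using fun_cong[OF e3, of "pt {U c0 j0, S c0 (L c0 - 1)}"] by (simp only: V3a[OF j0])
  then have K: "k1 (r2 c0 j0) + k1 (r3 c0 j0) = k2 (r2 c0 j0) + k2 (r3 c0 j0)" using L q2 by simp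
  have "- (k1 (r1 c0 (L c0)) * k1 (r3 c0 (L c0))) * (k1 (r2 c0 (L c0)) + k1 (r3 c0 (L c0)) + 2 * k1 (r1 c0 (L c0)) + k1 (r1 c0 j0))
      = - (k2 (r1 c0 (L c0)) * k2 (r3 c0 (L c0))) * (k2 (r2 c0 (L c0)) + k2 (r3 c0 (L c0)) + 2 * k2 (r1 c0 (L c0)) + k2 (r1 c0 j0))"
    using fun_cong[OF e3, of "pt {Y c0, S c0 (L c0 - 1), S c0 (j0 - 1)}"] by (simp only: V3b[OF j0])
  then have A: "k1 (r1 c0 j0) = k2 (r1 c0 j0)" using L q2 by simp
  show ?thesis using A K by simp
qed

end

theorem mainTheorem7:
  fixes Y :: "'c::finite \<Rightarrow> 's::finite" and S U :: "'c \<Rightarrow> nat \<Rightarrow> 's"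
    and L :: "'c \<Rightarrow> nat" and cls :: "'s \<Rightarrow> nat" and M :: nat and c0 :: 'c
  assumes "H1 Y S U L" and "H2 Y S U L cls M"
  shows "identifiable (reactions Y S U L)
           (\<lambda>k. (rate_a Y S U k c0 (L c0), rate_b Y S U k c0 (L c0), rate_c Y S U k c0 (L c0)))
           (S c0 (L c0)) 2 \<and>
         (1 < L c0 \<longrightarrow> identifiable (reactions Y S U L)
           (\<lambda>k. map (\<lambda>j. (rate_a Y S U k c0 j, rate_K Y S U k c0 j)) [1..<L c0])
           (S c0 (L c0)) 3)"
proof -
  interpret N: netw Y S U L cls M c0 using assms by unfold_locales
  have ra: "\<And>k j. rate_a Y S U k c0 j = k (N.r1 c0 j)" by (simp add: rate_a_def N.r1_def)
  have rb: "\<And>k j. rate_b Y S U k c0 j = k (N.r2 c0 j)" by (simp add: rate_b_def N.r2_def)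
  have rc: "\<And>k j. rate_c Y S U k c0 j = k (N.r3 c0 j)" by (simp add: rate_c_def N.r3_def)
  have rK: "\<And>k j. rate_K Y S U k c0 j = k (N.r2 c0 j) + k (N.r3 c0 j)" by (simp add: rate_K_def rb rc)
  show ?thesis
  proof
    show "identifiable (reactions Y S U L)
           (\<lambda>k. (rate_a Y S U k c0 (L c0), rate_b Y S U k c0 (L c0), rate_c Y S U k c0 (L c0)))
           (S c0 (L c0)) 2"
      unfolding identifiable_def
    proof (intro allI impI)
      fix k1 k2 :: "'s reaction \<Rightarrow> real"
      assume p1: "\<forall>r\<in>reactions Y S U L. 0 < k1 r" and p2: "\<forall>r\<in>reactions Y S U L. 0 < k2 r"
        and e: "\<forall>l\<in>{1..2}. iterder (reactions Y S U L) k1 l (\<lambda>x. x (S c0 (L c0))) = iterder (reactions Y S U L) k2 l (\<lambda>x. x (S c0 (L c0)))"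
      have e1: "iterder (reactions Y S U L) k1 1 (\<lambda>x. x (S c0 (L c0))) = iterder (reactions Y S U L) k2 1 (\<lambda>x. x (S c0 (L c0)))"
        using e by auto
      have e2: "iterder (reactions Y S U L) k1 2 (\<lambda>x. x (S c0 (L c0))) = iterder (reactions Y S U L) k2 2 (\<lambda>x. x (S c0 (L c0)))"
        using e by auto
      show "(rate_a Y S U k1 c0 (L c0), rate_b Y S U k1 c0 (L c0), rate_c Y S U k1 c0 (L c0)) =
            (rate_a Y S U k2 c0 (L c0), rate_b Y S U k2 c0 (L c0), rate_c Y S U k2 c0 (L c0))"
        using N.id_L[OF p1 p2 e1 e2] by (simp add: ra rb rc)
    qed
  next
    show "1 < L c0 \<longrightarrow> identifiable (reactions Y S U L)
           (\<lambda>k. map (\<lambda>j. (rate_a Y S U k c0 j, rate_K Y S U k c0 j)) [1..<L c0])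
           (S c0 (L c0)) 3"
      unfolding identifiable_def
    proof (intro allI impI)
      fix k1 k2 :: "'s reaction \<Rightarrow> real"
      assume p1: "\<forall>r\<in>reactions Y S U L. 0 < k1 r" and p2: "\<forall>r\<in>reactions Y S U L. 0 < k2 r"
        and e: "\<forall>l\<in>{1..3}. iterder (reactions Y S U L) k1 l (\<lambda>x. x (S c0 (L c0))) = iterder (reactions Y S U L) k2 l (\<lambda>x. x (S c0 (L c0)))"
      have e1: "iterder (reactions Y S U L) k1 1 (\<lambda>x. x (S c0 (L c0))) = iterder (reactions Y S U L) k2 1 (\<lambda>x. x (S c0 (L c0)))"
        using e by auto
      have e2: "iterder (reactions Y S U L) k1 2 (\<lambda>x. x (S c0 (L c0))) = iterder (reactions Y S U L) k2 2 (\<lambda>x. x (S c0 (L c0)))"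
        using e by auto
      have e3: "iterder (reactions Y S U L) k1 3 (\<lambda>x. x (S c0 (L c0))) = iterder (reactions Y S U L) k2 3 (\<lambda>x. x (S c0 (L c0)))"
        using e by auto
      show "map (\<lambda>j. (rate_a Y S U k1 c0 j, rate_K Y S U k1 c0 j)) [1..<L c0] =
            map (\<lambda>j. (rate_a Y S U k2 c0 j, rate_K Y S U k2 c0 j)) [1..<L c0]"
      proof (rule map_cong[OF refl])
        fix j assume "j \<in> set [1..<L c0]"
        then have j: "1 \<le> j" "j < L c0" by auto
        show "(rate_a Y S U k1 c0 j, rate_K Y S U k1 c0 j) = (rate_a Y S U k2 c0 j, rate_K Y S U k2 c0 j)"
          using N.id_j[OF p1 p2 e1 e2 e3 j] by (simp add: ra rK)
      qed
    qed
  qed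
qed

end
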